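(* Let $x$ be an ascent sequence that is a restricted growth function (RGF). Then: (i) $x$ contains $0101$ if and only if $x$ contains $101$; (ii) $x$ contains $0102$ if and only if $x$ contains $102$; (iii) $x$ contains $0120$ if and only if $x$ contains $120$; (iv) $x$ contains $0121$ if and only if $x$ contains $021$.
   Context: An ascent in an integer sequence $s_1\cdots s_m$ is an index $j$ with $s_j<s_{j+1}$; $\mathrm{asc}$ denotes the number of ascents. An ascent sequence is a sequence $x_1\cdots x_n$ of nonnegative integers with $x_1=0$ and $x_i\le 1+\mathrm{asc}(x_1\cdots x_{i-1})$ for all $i\ge2$. The reduction $\mathrm{red}(w)$ of an integer sequence $w$ replaces the $i$-th smallest distinct letter of $w$ by $i-1$; a pattern is a reduced sequence. A sequence $x$ contains a pattern $p=p_1\cdots p_k$ if there are indices $i_1<\cdots<i_k$ with $\mathrm{red}(x_{i_1}\cdots x_{i_k})=p$; otherwise $x$ avoids $p$. A sequence $x_1\cdots x_n$ of nonnegative integers is a restricted growth function (RGF) if for each $k\ge1$, the first occurrence of $k$ in $x$ (if any) is preceded by an occurrence of $k-1$. *)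

theory Defs
  imports Main "HOL-Library.Sublist"
begin

definition asc :: "nat list \<Rightarrow> nat" where
  "asc s = card {j. Suc j < length s \<and> s ! j < s ! Suc j}"

definition ascent_seq :: "nat list \<Rightarrow> bool" where
  "ascent_seq x \<longleftrightarrow> x = [] \<or>
     (x ! 0 = 0 \<and> (\<forall>i. 0 < i \<and> i < length x \<longrightarrow> x ! i \<le> 1 + asc (take i x)))"

definition red :: "nat list \<Rightarrow> nat list" where
  "red w = map (\<lambda>a. card {b \<in> set w. b < a}) w"

definition contains :: "nat list \<Rightarrow> nat list \<Rightarrow> bool" where
  "contains x p \<longleftrightarrow> (\<exists>ys. subseq ys x \<and> red ys = p)"

definition rgf :: "nat list \<Rightarrow> bool" where
  "rgf x \<longleftrightarrow> (\<forall>k i. 1 \<le> k \<and> i < length x \<and> x ! i = k \<and> (\<forall>j<i. x ! j \<noteq> k)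
              \<longrightarrow> (\<exists>j<i. x ! j = k - 1))"

end

theory Submission
  imports Defs
begin

lemma Ceq: "{y. y = a \<and> P y} = (if P a then {a} else {})" by auto

lemma rgf_before:
  assumes "rgf x"
  shows "i < length x \<Longrightarrow> x ! i = b \<Longrightarrow> a < b \<Longrightarrow> \<exists>q<i. x ! q = a"
proof (induction b arbitrary: i)
  case 0 then show ?case by simp
next
  case (Suc b)
  define i0 where "i0 = (LEAST k. x ! k = Suc b)"
  have i0le: "i0 \<le> i" using Suc.prems(2) unfolding i0_def by (rule Least_le)
  have i0x: "x ! i0 = Suc b" using Suc.prems(2) unfolding i0_def by (rule LeastI)
  have i0f: "\<forall>j<i0. x ! j \<noteq> Suc b" unfolding i0_def using not_less_Least by blast
  have "i0 < length x" using i0le Suc.prems(1) by simp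
  with assms i0x i0f have "\<exists>j<i0. x ! j = Suc b - 1"
    unfolding rgf_def by (metis One_nat_def le_add1 plus_1_eq_Suc)
  then obtain j where j: "j < i0" "x ! j = b" by auto
  show ?case
  proof (cases "a = b")
    case True then show ?thesis using j i0le by (intro exI[of _ j]) auto
  next
    case False
    then have "a < b" using Suc.prems by simp
    have "j < length x" using j i0le Suc.prems(1) by simp
    from Suc.IH[OF this j(2) \<open>a < b\<close>] obtain q where "q < j" "x ! q = a" by auto
    then show ?thesis using j i0le by (intro exI[of _ q]) auto
  qed
qed

lemma rgf_before_list:
  assumes "rgf x" "x = u @ b # v" "a < b"
  shows "a \<in> set u"
proof -
  have "length u < length x" "x ! length u = b" using assms(2) by auto
  from rgf_before[OF assms(1) this assms(3)] obtain q where "q < length u" "x ! q = a" by auto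
  then show ?thesis using assms(2) by (metis nth_append nth_mem)
qed

lemma red_length: "length (red w) = length w" unfolding red_def by simp

lemma red_less:
  assumes "i < length w" "j < length w"
  shows "(red w ! i < red w ! j) = (w ! i < w ! j)"
proof -
  have ri: "red w ! i = card {b \<in> set w. b < w ! i}" and rj: "red w ! j = card {b \<in> set w. b < w ! j}"
    using assms unfolding red_def by simp_all
  show ?thesis
  proof
    assume "w ! i < w ! j"
    have m: "w ! i \<in> {b \<in> set w. b < w ! j}" using assms \<open>w ! i < w ! j\<close> by simp
    have sub: "{b \<in> set w. b < w ! i} \<subseteq> {b \<in> set w. b < w ! j}"
      using \<open>w ! i < w ! j\<close> by auto
    have "w ! i \<notin> {b \<in> set w. b < w ! i}" by simp
    then have "{b \<in> set w. b < w ! i} \<subset> {b \<in> set w. b < w ! j}"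
      using m sub by blast
    then show "red w ! i < red w ! j" unfolding ri rj by (simp add: psubset_card_mono)
  next
    assume "red w ! i < red w ! j"
    show "w ! i < w ! j"
    proof (rule ccontr)
      assume "\<not> w ! i < w ! j"
      then have "{b \<in> set w. b < w ! j} \<subseteq> {b \<in> set w. b < w ! i}" by auto
      then have "red w ! j \<le> red w ! i" unfolding ri rj by (simp add: card_mono)
      then show False using \<open>red w ! i < red w ! j\<close> by simp
    qed
  qed
qed

lemma red_lessP:
  assumes "red w = p" "i < length p" "j < length p"
  shows "(w ! i < w ! j) = (p ! i < p ! j)"
  using red_less[of i w j] assms red_length[of w] by auto

lemma len3: "length ys = 3 \<Longrightarrow> \<exists>u v w. ys = [u,v,w]"
  by (auto simp: length_Suc_conv numeral_eq_Suc)
lemma len4: "length ys = 4 \<Longrightarrow> \<exists>u v w z. ys = [u,v,w,z]"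
  by (auto simp: length_Suc_conv numeral_eq_Suc)

lemma get3:
  assumes "contains x p" "length p = 3"
  obtains u v w where "subseq [u,v,w] x" "red [u,v,w] = p"
proof -
  obtain ys where "subseq ys x" "red ys = p" using assms unfolding contains_def by auto
  moreover then obtain u v w where "ys = [u,v,w]" using len3 red_length assms(2) by metis
  ultimately show ?thesis using that by simp
qed
lemma get4:
  assumes "contains x p" "length p = 4"
  obtains u v w z where "subseq [u,v,w,z] x" "red [u,v,w,z] = p"
proof -
  obtain ys where "subseq ys x" "red ys = p" using assms unfolding contains_def by auto
  moreover then obtain u v w z where "ys = [u,v,w,z]" using len4 red_length assms(2) by metis
  ultimately show ?thesis using that by simp
qed


lemma prepend:
  assumes "rgf x" "subseq (b#rest) x" "a < b"
  shows "subseq (a#b#rest) x"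
proof -
  obtain us vs where x: "x = us @ b # vs" "subseq rest vs"
    using list_emb_ConsD[OF assms(2)] by auto
  have "a \<in> set us" using rgf_before_list[OF assms(1) x(1) assms(3)] .
  then obtain r1 r2 where "us = r1 @ a # r2" by (meson split_list)
  then show ?thesis using x by (simp add: list_emb_append2)
qed

lemma ivdir:
  assumes "rgf x" "subseq [a,c,b] x" "a < b" "b < c"
  shows "subseq [a,b,c,b] x"
proof -
  obtain us vs where x: "x = us @ a # vs" "subseq [c,b] vs"
    using list_emb_ConsD[OF assms(2)] by auto
  obtain ws zs where v: "vs = ws @ c # zs" "subseq [b] zs"
    using list_emb_ConsD[OF x(2)] by auto
  have "x = (us @ a # ws) @ c # zs" using x v by simp
  from rgf_before_list[OF assms(1) this assms(4)]
  have "b \<in> set us \<or> b \<in> set ws" using assms(3) by auto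
  then show ?thesis
  proof
    assume "b \<in> set ws"
    then obtain r1 r2 where "ws = r1 @ b # r2" by (meson split_list)
    then show ?thesis using x v by (simp add: list_emb_append2)
  next
    assume "b \<in> set us"
    then obtain r1 r2 where us: "us = r1 @ b # r2" by (meson split_list)
    have "x = r1 @ b # (r2 @ a # vs)" using x us by simp
    from rgf_before_list[OF assms(1) this assms(3)] obtain t1 t2 where "r1 = t1 @ a # t2"
      by (meson split_list)
    then show ?thesis using x v us by (simp add: list_emb_append2)
  qed
qed

lemma r0101: "(a::nat) < b \<Longrightarrow> red [a,b,a,b] = [0,1,0,1]"
  unfolding red_def by (simp add: conj_disj_distribR Collect_disj_eq Ceq insert_commute)
lemma r101: "(a::nat) < b \<Longrightarrow> red [b,a,b] = [1,0,1]"
  unfolding red_def by (simp add: conj_disj_distribR Collect_disj_eq Ceq insert_commute)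
lemma r0102: "(a::nat) < b \<Longrightarrow> b < c \<Longrightarrow> red [a,b,a,c] = [0,1,0,2]"
  unfolding red_def by (simp add: conj_disj_distribR Collect_disj_eq Ceq insert_commute)
lemma r102: "(a::nat) < b \<Longrightarrow> b < c \<Longrightarrow> red [b,a,c] = [1,0,2]"
  unfolding red_def by (simp add: conj_disj_distribR Collect_disj_eq Ceq insert_commute)
lemma r0120: "(a::nat) < b \<Longrightarrow> b < c \<Longrightarrow> red [a,b,c,a] = [0,1,2,0]"
  unfolding red_def by (simp add: conj_disj_distribR Collect_disj_eq Ceq insert_commute)
lemma r120: "(a::nat) < b \<Longrightarrow> b < c \<Longrightarrow> red [b,c,a] = [1,2,0]"
  unfolding red_def by (simp add: conj_disj_distribR Collect_disj_eq Ceq insert_commute)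
lemma r0121: "(a::nat) < b \<Longrightarrow> b < c \<Longrightarrow> red [a,b,c,b] = [0,1,2,1]"
  unfolding red_def by (simp add: conj_disj_distribR Collect_disj_eq Ceq insert_commute)
lemma r021: "(a::nat) < b \<Longrightarrow> b < c \<Longrightarrow> red [a,c,b] = [0,2,1]"
  unfolding red_def by (simp add: conj_disj_distribR Collect_disj_eq Ceq insert_commute)

lemma drop1: "subseq (a#xs) x \<Longrightarrow> subseq xs x"
  by (rule subseq_Cons')

theorem lemma2p2:
  fixes x :: "nat list"
  assumes "ascent_seq x" and "rgf x"
  shows "(contains x [0,1,0,1] \<longleftrightarrow> contains x [1,0,1])
       \<and> (contains x [0,1,0,2] \<longleftrightarrow> contains x [1,0,2])
       \<and> (contains x [0,1,2,0] \<longleftrightarrow> contains x [1,2,0])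
       \<and> (contains x [0,1,2,1] \<longleftrightarrow> contains x [0,2,1])"
proof (intro conjI iffI)
  assume "contains x [0,1,0,1]"
  then obtain a b c d where s: "subseq [a,b,c,d] x" and r: "red [a,b,c,d] = [0,1,0,1]"
    by (rule get4) simp
  have "c < b" using red_lessP[OF r, of 2 1] by simp
  moreover have "b = d" using red_lessP[OF r, of 1 3] red_lessP[OF r, of 3 1] by simp
  ultimately show "contains x [1,0,1]" unfolding contains_def
    using drop1[OF s] r101 by (intro exI[of _ "[b,c,d]"]) auto
next
  assume "contains x [1,0,1]"
  then obtain u v w where s: "subseq [u,v,w] x" and r: "red [u,v,w] = [1,0,1]"
    by (rule get3) simp
  have vu: "v < u" using red_lessP[OF r, of 1 0] by simp
  moreover have "u = w" using red_lessP[OF r, of 0 2] red_lessP[OF r, of 2 0] by simp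
  ultimately show "contains x [0,1,0,1]" unfolding contains_def
    using prepend[OF assms(2) s vu] r0101[OF vu] by (intro exI[of _ "[v,u,v,w]"]) auto
next
  assume "contains x [0,1,0,2]"
  then obtain a b c d where s: "subseq [a,b,c,d] x" and r: "red [a,b,c,d] = [0,1,0,2]"
    by (rule get4) simp
  have "c < b" using red_lessP[OF r, of 2 1] by simp
  moreover have "b < d" using red_lessP[OF r, of 1 3] by simp
  ultimately show "contains x [1,0,2]" unfolding contains_def
    using drop1[OF s] r102 by (intro exI[of _ "[b,c,d]"]) auto
next
  assume "contains x [1,0,2]"
  then obtain u v w where s: "subseq [u,v,w] x" and r: "red [u,v,w] = [1,0,2]"
    by (rule get3) simp
  have vu: "v < u" using red_lessP[OF r, of 1 0] by simp
  moreover have "u < w" using red_lessP[OF r, of 0 2] by simp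
  ultimately show "contains x [0,1,0,2]" unfolding contains_def
    using prepend[OF assms(2) s vu] r0102 by (intro exI[of _ "[v,u,v,w]"]) auto
next
  assume "contains x [0,1,2,0]"
  then obtain a b c d where s: "subseq [a,b,c,d] x" and r: "red [a,b,c,d] = [0,1,2,0]"
    by (rule get4) simp
  have "d < b" using red_lessP[OF r, of 3 1] by simp
  moreover have "b < c" using red_lessP[OF r, of 1 2] by simp
  ultimately show "contains x [1,2,0]" unfolding contains_def
    using drop1[OF s] r120 by (intro exI[of _ "[b,c,d]"]) auto
next
  assume "contains x [1,2,0]"
  then obtain u v w where s: "subseq [u,v,w] x" and r: "red [u,v,w] = [1,2,0]"
    by (rule get3) simp
  have wu: "w < u" using red_lessP[OF r, of 2 0] by simp
  moreover have "u < v" using red_lessP[OF r, of 0 1] by simp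
  ultimately show "contains x [0,1,2,0]" unfolding contains_def
    using prepend[OF assms(2) s wu] r0120 by (intro exI[of _ "[w,u,v,w]"]) auto
next
  assume "contains x [0,1,2,1]"
  then obtain a b c d where s: "subseq [a,b,c,d] x" and r: "red [a,b,c,d] = [0,1,2,1]"
    by (rule get4) simp
  have ab: "a < b" using red_lessP[OF r, of 0 1] by simp
  have bc: "b < c" using red_lessP[OF r, of 1 2] by simp
  have bd: "b = d" using red_lessP[OF r, of 1 3] red_lessP[OF r, of 3 1] by simp
  obtain us vs where x: "x = us @ a # vs" "subseq [b,c,d] vs"
    using list_emb_ConsD[OF s] by auto
  have "subseq [a,c,d] x" using x drop1[OF x(2)] by (simp add: list_emb_append2)
  then show "contains x [0,2,1]" unfolding contains_def
    using r021[OF ab bc] bd by (intro exI[of _ "[a,c,d]"]) auto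
next
  assume "contains x [0,2,1]"
  then obtain u v w where s: "subseq [u,v,w] x" and r: "red [u,v,w] = [0,2,1]"
    by (rule get3) simp
  have uw: "u < w" using red_lessP[OF r, of 0 2] by simp
  have wv: "w < v" using red_lessP[OF r, of 2 1] by simp
  show "contains x [0,1,2,1]" unfolding contains_def
    using ivdir[OF assms(2) s uw wv] r0121[OF uw wv] by blast
qed

end
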